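(* Let the parameters satisfy $\alpha\in(0,1]$, $\alpha_1,\alpha_2\in(0,2]$ and either (B1) $\alpha_1,\alpha_2\in(0,2)$, or (B2) $\alpha\in(0,1)$ with $\alpha_1\neq 2$ or $\alpha_2\neq 2$. Let $\mathcal{M},\mathcal{N}\subset\mathbb{R}^n$ be two manifolds that are $\mathcal{C}^k$-smooth ($k\geq 2$) around a point $\bar{x}\in\mathcal{M}\cap\mathcal{N}$, such that $\mathcal{M}\cap\mathcal{N}$ is a $\mathcal{C}^k$-smooth manifold around $\bar{x}$ and $\mathrm{T}_{\mathcal{M}\cap\mathcal{N}}(\bar{x})=\mathrm{T}_{\mathcal{M}}(\bar{x})\cap\mathrm{T}_{\mathcal{N}}(\bar{x})$. Then \[ \sigma(S_{\mathrm{T}(\bar{x})})\coloneqq\|S_{\mathrm{T}(\bar{x})}-\Pi_{\mathrm{T}_{\mathcal{M}}(\bar{x})\cap\mathrm{T}_{\mathcal{N}}(\bar{x})}\|<1, \] where $S_{\mathrm{T}(\bar{x})}=\alpha\,\Pi^{\alpha_2}_{\mathrm{T}_{\mathcal{M}}(\bar{x})}\Pi^{\alpha_1}_{\mathrm{T}_{\mathcal{N}}(\bar{x})}+(1-\alpha)I$.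
   Context: For a closed nonempty set $C$, $\Pi_C$ is the projection and $\Pi_C^{\alpha}\coloneqq(1-\alpha)I+\alpha\Pi_C$ is the relaxed projection; $\|\cdot\|$ is the operator norm. The tangent space of a manifold $\mathcal{M}$ locally defined by $\{x:F(x)=0\}$ ($F$ of class $\mathcal{C}^k$ with surjective derivative) is $\mathrm{T}_{\mathcal{M}}(x)=\ker \mathrm{J}F(x)$. *)

theory Defs
  imports "HOL-Analysis.Analysis"
begin

text \<open>C^k smoothness on a set U: there are iterated derivatives D j x [v1,...,vj]
  (the j-th Frechet derivative at x applied to v1,...,vj), with D 0 = F, each D (j+1)
  the Frechet derivative of D j (in x), for j < k, and D k continuous in x.\<close>
definition Ck_on :: "nat \<Rightarrow> 'a::real_normed_vector set \<Rightarrow> ('a \<Rightarrow> 'b::real_normed_vector) \<Rightarrow> bool" where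
  "Ck_on k U F \<longleftrightarrow>
     (\<exists>D :: nat \<Rightarrow> 'a \<Rightarrow> 'a list \<Rightarrow> 'b.
        (\<forall>x\<in>U. D 0 x [] = F x) \<and>
        (\<forall>j<k. \<forall>x\<in>U. \<forall>vs. length vs = j \<longrightarrow>
              ((\<lambda>y. D j y vs) has_derivative (\<lambda>v. D (Suc j) x (v # vs))) (at x)) \<and>
        (\<forall>vs. length vs = k \<longrightarrow> continuous_on U (\<lambda>y. D k y vs)))"

definition local_manifold_rep ::
  "nat \<Rightarrow> 'a::real_normed_vector set \<Rightarrow> 'a \<Rightarrow> 'a set \<Rightarrow> ('a \<Rightarrow> 'b::real_normed_vector) \<Rightarrow> ('a \<Rightarrow> 'b) \<Rightarrow> bool" where
  "local_manifold_rep k M xb U F F' \<longleftrightarrow>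
     open U \<and> xb \<in> U \<and> Ck_on k U F \<and>
     (\<forall>x\<in>U. \<exists>D. (F has_derivative D) (at x) \<and> surj D) \<and>
     (F has_derivative F') (at xb) \<and>
     M \<inter> U = {x\<in>U. F x = 0}"

text \<open>Tangent space = kernel of the Jacobian.\<close>
definition kernel :: "('a \<Rightarrow> 'b::zero) \<Rightarrow> 'a set" where
  "kernel L = {v. L v = 0}"

definition Proj :: "'a::{real_inner,heine_borel} set \<Rightarrow> 'a \<Rightarrow> 'a" where
  "Proj C = closest_point C"

definition relaxed_proj :: "real \<Rightarrow> 'a::{real_inner,heine_borel} set \<Rightarrow> 'a \<Rightarrow> 'a" where
  "relaxed_proj a C x = (1 - a) *\<^sub>R x + a *\<^sub>R Proj C x"

end

theory Submission
  imports Defs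
begin


lemma proj_props:
  fixes S :: "'a::euclidean_space set" assumes "subspace S"
  shows proj_in: "Proj S x \<in> S" and proj_orth: "y \<in> S \<Longrightarrow> inner (x - Proj S x) y = 0"
proof -
  have cl: "closed S" using assms closed_subspace by auto
  have ne: "S \<noteq> {}" using assms subspace_0 by auto
  have cv: "convex S" using assms subspace_imp_convex by auto
  show pin: "Proj S x \<in> S" unfolding Proj_def using closest_point_in_set[OF cl ne] .
  assume y: "y \<in> S"
  have "Proj S x + y \<in> S" "Proj S x - y \<in> S" using pin y assms subspace_add subspace_diff by blast+
  from closest_point_dot[OF cv cl this(1), of x] closest_point_dot[OF cv cl this(2), of x]
  show "inner (x - Proj S x) y = 0" unfolding Proj_def by (simp add: inner_diff_right)
qed

lemma proj_unique:
  fixes S :: "'a::euclidean_space set" assumes "subspace S" "p \<in> S" "\<forall>y\<in>S. inner (x - p) y = 0"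
  shows "Proj S x = p"
proof -
  let ?q = "Proj S x"
  have d: "?q - p \<in> S" using proj_in[OF assms(1)] assms(2) assms(1) subspace_diff by blast
  have "inner (x - p) (?q - p) = 0" using assms(3) d by auto
  moreover have "inner (x - ?q) (?q - p) = 0" using proj_orth[OF assms(1) d] .
  ultimately have "inner (?q - p) (?q - p) = 0" by (simp add: inner_diff_left inner_diff_right inner_commute)
  then show ?thesis by simp
qed

lemma proj_add:
  fixes S :: "'a::euclidean_space set" assumes "subspace S"
  shows "Proj S (x + y) = Proj S x + Proj S y"
proof (rule proj_unique[OF assms])
  show "Proj S x + Proj S y \<in> S" using proj_in[OF assms] assms subspace_add by blast
  show "\<forall>z\<in>S. inner (x + y - (Proj S x + Proj S y)) z = 0"
  proof
    fix z assume "z \<in> S"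
    then have "inner (x - Proj S x) z = 0" "inner (y - Proj S y) z = 0" using proj_orth[OF assms] by auto
    moreover have "x + y - (Proj S x + Proj S y) = (x - Proj S x) + (y - Proj S y)" by simp
    ultimately show "inner (x + y - (Proj S x + Proj S y)) z = 0" by (simp only: inner_add_left)
  qed
qed

lemma proj_scale:
  fixes S :: "'a::euclidean_space set" assumes "subspace S"
  shows "Proj S (c *\<^sub>R x) = c *\<^sub>R Proj S x"
proof (rule proj_unique[OF assms])
  show "c *\<^sub>R Proj S x \<in> S" using proj_in[OF assms] assms subspace_scale by blast
  show "\<forall>y\<in>S. inner (c *\<^sub>R x - c *\<^sub>R Proj S x) y = 0"
    using proj_orth[OF assms] by (simp flip: scaleR_diff_right)
qed

lemma proj_self: "x \<in> S \<Longrightarrow> Proj S x = x"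
  unfolding Proj_def by (rule closest_point_self)

lemma proj_fix: fixes S :: "'a::euclidean_space set" assumes "subspace S" "Proj S x = x" shows "x \<in> S"
  using proj_in[OF assms(1), of x] assms(2) by simp

lemma proj_linear: assumes "subspace (S::'a::euclidean_space set)" shows "linear (Proj S)"
  by (rule linearI) (simp_all add: proj_add[OF assms] proj_scale[OF assms])

lemma relaxed_eq: "relaxed_proj a S x = Proj S x + (1 - a) *\<^sub>R (x - Proj S x)"
  unfolding relaxed_proj_def by (simp add: algebra_simps)

lemma pyth: "inner (p::'a::real_inner) q = 0 \<Longrightarrow> inner (p + q) (p + q) = inner p p + inner q q"
  by (simp add: inner_add_left inner_add_right inner_commute)

lemma pyth2: "inner (p::'a::real_inner) q = 0 \<Longrightarrow> inner (p + c *\<^sub>R q) (p + c *\<^sub>R q) = inner p p + c^2 * inner q q"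
  by (simp add: inner_add_left inner_add_right inner_commute power2_eq_square)

lemma relaxed_sq:
  fixes S :: "'a::euclidean_space set" assumes "subspace S"
  shows "inner (relaxed_proj a S x) (relaxed_proj a S x)
     = inner (Proj S x) (Proj S x) + (1 - a)^2 * inner (x - Proj S x) (x - Proj S x)"
    and "inner x x = inner (Proj S x) (Proj S x) + inner (x - Proj S x) (x - Proj S x)"
proof -
  have o: "inner (x - Proj S x) (Proj S x) = 0" using proj_orth[OF assms proj_in[OF assms]] .
  then have o2: "inner (Proj S x) (x - Proj S x) = 0" by (simp add: inner_commute)
  show "inner (relaxed_proj a S x) (relaxed_proj a S x)
     = inner (Proj S x) (Proj S x) + (1 - a)^2 * inner (x - Proj S x) (x - Proj S x)"
    unfolding relaxed_eq by (rule pyth2[OF o2])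
  show "inner x x = inner (Proj S x) (Proj S x) + inner (x - Proj S x) (x - Proj S x)"
    using pyth[OF o2] by simp
qed

lemma relaxed_le:
  fixes S :: "'a::euclidean_space set" assumes "subspace S" "0 \<le> a" "a \<le> 2"
  shows "norm (relaxed_proj a S x) \<le> norm x"
proof -
  have "0 \<le> a * (2 - a)" using assms by simp
  moreover have "(1 - a)^2 = 1 - a * (2 - a)" by (simp add: power2_eq_square algebra_simps)
  ultimately have "(1 - a)^2 \<le> 1" by linarith
  then have "(1 - a)^2 * inner (x - Proj S x) (x - Proj S x) \<le> inner (x - Proj S x) (x - Proj S x)"
    by (simp add: mult_left_le_one_le)
  then show ?thesis unfolding norm_le using relaxed_sq(1)[OF assms(1), of a x] relaxed_sq(2)[OF assms(1), of x] by linarith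
qed

lemma cancel_lt1: assumes "c * X = X" "c < (1::real)" shows "X = 0"
proof -
  have "(1 - c) * X = 0" using assms(1) by (simp add: left_diff_distrib)
  then show ?thesis using assms(2) by simp
qed

lemma relaxed_eq_in:
  fixes S :: "'a::euclidean_space set" assumes "subspace S" "0 < a" "a < 2"
    and "norm (relaxed_proj a S x) = norm x"
  shows "x \<in> S"
proof -
  have "0 < a * (2 - a)" using assms by simp
  moreover have "(1 - a)^2 = 1 - a * (2 - a)" by (simp add: power2_eq_square algebra_simps)
  ultimately have lt: "(1 - a)^2 < 1" by linarith
  have "(1 - a)^2 * inner (x - Proj S x) (x - Proj S x) = inner (x - Proj S x) (x - Proj S x)"
    using assms(4) unfolding norm_eq using relaxed_sq(1)[OF assms(1), of a x] relaxed_sq(2)[OF assms(1), of x] by linarith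
  then have "inner (x - Proj S x) (x - Proj S x) = 0" using lt by (rule cancel_lt1)
  then show ?thesis using proj_fix[OF assms(1)] by simp
qed

lemma relaxed_fix_in:
  fixes S :: "'a::euclidean_space set" assumes "subspace S" "0 < a" "relaxed_proj a S x = x"
  shows "x \<in> S"
proof -
  have "(1 - a) *\<^sub>R x + a *\<^sub>R Proj S x = x" using assms(3) unfolding relaxed_proj_def .
  then have "a *\<^sub>R (Proj S x - x) = 0" by (simp add: scaleR_diff_right scaleR_diff_left algebra_simps)
  then show ?thesis using assms(2) proj_fix[OF assms(1)] by simp
qed

lemma relaxed_self: "x \<in> S \<Longrightarrow> relaxed_proj a S x = x"
  unfolding relaxed_proj_def by (simp add: proj_self scaleR_diff_left)

lemma relaxed_linear: assumes "subspace (S::'a::euclidean_space set)" shows "linear (relaxed_proj a S)"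
proof (rule linearI)
  fix x y
  show "relaxed_proj a S (x + y) = relaxed_proj a S x + relaxed_proj a S y"
    unfolding relaxed_proj_def proj_add[OF assms] by (simp only: scaleR_add_right ac_simps)
  fix c :: real
  show "relaxed_proj a S (c *\<^sub>R x) = c *\<^sub>R relaxed_proj a S x"
    unfolding relaxed_proj_def proj_scale[OF assms] by (simp only: scaleR_add_right scaleR_scaleR mult.commute)
qed

lemma kernel_subspace: assumes "bounded_linear L" shows "subspace (kernel L)"
proof -
  interpret bounded_linear L by fact
  show ?thesis unfolding subspace_def kernel_def by (simp add: zero add scale)
qed

lemma strict_contr:
  fixes A B :: "'a::euclidean_space set"
  assumes A: "subspace A" and B: "subspace B"
    and "0 < \<alpha>" "\<alpha> \<le> 1" "0 < \<alpha>1" "\<alpha>1 \<le> 2" "0 < \<alpha>2" "\<alpha>2 \<le> 2"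
    and cases: "(\<alpha>1 < 2 \<and> \<alpha>2 < 2) \<or> (\<alpha> < 1 \<and> (\<alpha>1 \<noteq> 2 \<or> \<alpha>2 \<noteq> 2))"
    and orth: "\<forall>y\<in>A \<inter> B. inner d y = 0" and dnz: "d \<noteq> 0"
  shows "norm (\<alpha> *\<^sub>R relaxed_proj \<alpha>2 A (relaxed_proj \<alpha>1 B d) + (1 - \<alpha>) *\<^sub>R d) < norm d"
proof (rule ccontr)
  define e where "e = relaxed_proj \<alpha>1 B d"
  define u where "u = relaxed_proj \<alpha>2 A e"
  assume "\<not> ?thesis"
  then have ge: "norm d \<le> norm (\<alpha> *\<^sub>R u + (1 - \<alpha>) *\<^sub>R d)" unfolding u_def e_def by simp
  have e1: "norm e \<le> norm d" unfolding e_def using relaxed_le[OF B] assms by auto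
  have u1: "norm u \<le> norm e" unfolding u_def using relaxed_le[OF A] assms by auto
  have tri: "norm (\<alpha> *\<^sub>R u + (1 - \<alpha>) *\<^sub>R d) \<le> \<alpha> * norm u + (1 - \<alpha>) * norm d"
    using norm_triangle_ineq[of "\<alpha> *\<^sub>R u" "(1 - \<alpha>) *\<^sub>R d"] assms by simp
  have "(1 - \<alpha>) * norm d = norm d - \<alpha> * norm d" by (simp add: algebra_simps)
  then have "\<alpha> * norm d \<le> \<alpha> * norm u" using ge tri by linarith
  then have "norm d \<le> norm u" using assms by simp
  then have eqs: "norm u = norm e" "norm e = norm d" using e1 u1 by linarith+
  have notC: "d \<notin> A \<inter> B"
  proof
    assume "d \<in> A \<inter> B"
    then have "inner d d = 0" using orth by blast
    then show False using dnz by simp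
  qed
  show False
  proof (cases "\<alpha>1 < 2 \<and> \<alpha>2 < 2")
    case True
    have "d \<in> B" using relaxed_eq_in[OF B, of \<alpha>1 d] True assms eqs unfolding e_def by auto
    then have "e = d" unfolding e_def by (simp add: relaxed_self)
    then have "d \<in> A" using relaxed_eq_in[OF A, of \<alpha>2 e] True assms eqs unfolding u_def by auto
    then show False using notC \<open>d \<in> B\<close> by auto
  next
    case False
    then have al: "\<alpha> < 1" and c2: "\<alpha>1 \<noteq> 2 \<or> \<alpha>2 \<noteq> 2" using cases by auto
    have "u = d"
    proof -
      have "inner d d \<le> inner (\<alpha> *\<^sub>R u + (1 - \<alpha>) *\<^sub>R d) (\<alpha> *\<^sub>R u + (1 - \<alpha>) *\<^sub>R d)"
        using ge unfolding norm_le .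
      moreover have "inner u u = inner d d" using eqs norm_eq by metis
      moreover have "inner (\<alpha> *\<^sub>R u + (1 - \<alpha>) *\<^sub>R d) (\<alpha> *\<^sub>R u + (1 - \<alpha>) *\<^sub>R d)
          = \<alpha>^2 * inner u u + (1 - \<alpha>)^2 * inner d d + 2 * \<alpha> * (1 - \<alpha>) * inner u d"
        by (simp add: inner_add_left inner_add_right inner_commute power2_eq_square algebra_simps)
      moreover have "inner (u - d) (u - d) = inner u u + inner d d - 2 * inner u d"
        by (simp add: inner_diff_left inner_diff_right inner_commute)
      ultimately have "2 * \<alpha> * (1 - \<alpha>) * inner (u - d) (u - d) \<le> 0"
        by (simp add: power2_eq_square algebra_simps)
      moreover have "0 < 2 * \<alpha> * (1 - \<alpha>)" using al assms by simp
      ultimately have "inner (u - d) (u - d) \<le> 0" by (meson mult_pos_pos not_le)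
      then have "inner (u - d) (u - d) = 0" using inner_ge_zero[of "u - d"] by linarith
      then show ?thesis by simp
    qed
    show False
    proof (cases "\<alpha>1 \<noteq> 2")
      case True
      then have a1: "\<alpha>1 < 2" using assms by simp
      have "d \<in> B" using relaxed_eq_in[OF B, of \<alpha>1 d] a1 assms eqs unfolding e_def by auto
      then have "e = d" unfolding e_def by (simp add: relaxed_self)
      then have "d \<in> A" using relaxed_fix_in[OF A, of \<alpha>2 d] \<open>u = d\<close> assms unfolding u_def by auto
      then show False using notC \<open>d \<in> B\<close> by auto
    next
      case False
      then have a2: "\<alpha>2 < 2" using c2 assms by simp
      have "e \<in> A" using relaxed_eq_in[OF A, of \<alpha>2 e] a2 assms eqs unfolding u_def by auto
      then have "u = e" unfolding u_def by (simp add: relaxed_self)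
      then have "e = d" using \<open>u = d\<close> by simp
      then have "d \<in> B" using relaxed_fix_in[OF B, of \<alpha>1 d] assms unfolding e_def by auto
      then show False using notC \<open>e \<in> A\<close> \<open>e = d\<close> by auto
    qed
  qed
qed



lemma main_abs:
  fixes A B :: "(real ^ 'n) set"
  assumes A: "subspace A" and B: "subspace B"
    and "0 < \<alpha>" "\<alpha> \<le> 1" "0 < \<alpha>1" "\<alpha>1 \<le> 2" "0 < \<alpha>2" "\<alpha>2 \<le> 2"
    and cases: "(\<alpha>1 < 2 \<and> \<alpha>2 < 2) \<or> (\<alpha> < 1 \<and> (\<alpha>1 \<noteq> 2 \<or> \<alpha>2 \<noteq> 2))"
  shows "onorm (\<lambda>x. (\<alpha> *\<^sub>R relaxed_proj \<alpha>2 A (relaxed_proj \<alpha>1 B x) + (1 - \<alpha>) *\<^sub>R x)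
                    - Proj (A \<inter> B) x) < 1"
proof -
  define T where "T = (\<lambda>x. \<alpha> *\<^sub>R relaxed_proj \<alpha>2 A (relaxed_proj \<alpha>1 B x) + (1 - \<alpha>) *\<^sub>R x)"
  define L where "L = (\<lambda>x. T x - Proj (A \<inter> B) x)"
  have C: "subspace (A \<inter> B)" using A B subspace_inter by blast
  have linT: "linear T" unfolding T_def
    apply (rule linearI)
    apply (simp add: linear_add[OF relaxed_linear[OF A]] linear_add[OF relaxed_linear[OF B]] scaleR_add_right)
    apply (simp add: linear_scale[OF relaxed_linear[OF A]] linear_scale[OF relaxed_linear[OF B]] scaleR_add_right mult.commute)
    done
  have linL: "linear L" unfolding L_def using linT proj_linear[OF C] by (rule linear_compose_sub)
  have key: "norm (L x) < norm x" if "x \<noteq> 0" for x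
  proof -
    define c where "c = Proj (A \<inter> B) x"
    define d where "d = x - c"
    have cC: "c \<in> A \<inter> B" unfolding c_def using proj_in[OF C] .
    have orth: "\<forall>y\<in>A \<inter> B. inner d y = 0" unfolding d_def c_def using proj_orth[OF C] by auto
    have Tc: "T c = c" unfolding T_def using cC by (simp add: relaxed_self algebra_simps)
    have "T x = T c + T d" unfolding d_def using linear_add[OF linT, of c "x - c"] by simp
    then have Lx: "L x = T d" unfolding L_def c_def[symmetric] using Tc by simp
    have "inner x x = inner c c + inner d d" unfolding c_def d_def using relaxed_sq(2)[OF C] .
    then have "norm d \<le> norm x" unfolding norm_le using inner_ge_zero[of c] by linarith
    show ?thesis
    proof (cases "d = 0")
      case True
      then show ?thesis using Lx that linear_0[OF linT] by simp
    next
      case False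
      have "norm (T d) < norm d" unfolding T_def
        by (rule strict_contr[OF A B assms(3-8) cases orth False])
      then show ?thesis using Lx \<open>norm d \<le> norm x\<close> by simp
    qed
  qed
  have cont: "continuous_on (sphere 0 1) (\<lambda>x. norm (L x))"
    using linL by (intro continuous_on_norm linear_continuous_on linear_conv_bounded_linear[THEN iffD1])
  have ne: "sphere (0::real^'n) 1 \<noteq> {}" by simp
  obtain x0 where x0: "x0 \<in> sphere 0 1" and mx: "\<forall>y\<in>sphere 0 1. norm (L y) \<le> norm (L x0)"
    using continuous_attains_sup[OF compact_sphere ne cont] by blast
  have nx0: "norm x0 = 1" using x0 by simp
  have "x0 \<noteq> 0" using nx0 by auto
  then have "norm (L x0) < norm x0" by (rule key)
  then have lt: "norm (L x0) < 1" using nx0 by simp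
  have "onorm L \<le> norm (L x0)"
  proof (rule onorm_le)
    fix x :: "real^'n"
    show "norm (L x) \<le> norm (L x0) * norm x"
    proof (cases "x = 0")
      case True then show ?thesis using linear_0[OF linL] by simp
    next
      case False
      have "(1 / norm x) *\<^sub>R x \<in> sphere 0 1" using False by simp
      then have "norm (L ((1 / norm x) *\<^sub>R x)) \<le> norm (L x0)" using mx by blast
      then have "norm (L x) / norm x \<le> norm (L x0)" using linear_scale[OF linL] by simp
      then show ?thesis using False by (simp add: divide_le_eq)
    qed
  qed
  then have "onorm L < 1" using lt by linarith
  then show ?thesis unfolding L_def T_def .
qed

theorem lemma6:
  fixes \<alpha> \<alpha>1 \<alpha>2 :: real and k :: nat
    and M N :: "(real ^ 'n) set" and xb :: "real ^ 'n"
    and U\<^sub>M U\<^sub>N U\<^sub>M\<^sub>N :: "(real ^ 'n) set"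
    and FM :: "real ^ 'n \<Rightarrow> 'm::euclidean_space" and FM' :: "real ^ 'n \<Rightarrow> 'm"
    and FN :: "real ^ 'n \<Rightarrow> 'p::euclidean_space" and FN' :: "real ^ 'n \<Rightarrow> 'p"
    and FMN :: "real ^ 'n \<Rightarrow> 'q::euclidean_space" and FMN' :: "real ^ 'n \<Rightarrow> 'q"
  assumes "0 < \<alpha>" "\<alpha> \<le> 1" "0 < \<alpha>1" "\<alpha>1 \<le> 2" "0 < \<alpha>2" "\<alpha>2 \<le> 2"
    and "(\<alpha>1 < 2 \<and> \<alpha>2 < 2) \<or> (\<alpha> < 1 \<and> (\<alpha>1 \<noteq> 2 \<or> \<alpha>2 \<noteq> 2))"
    and "k \<ge> 2"
    and "xb \<in> M \<inter> N"
    and "local_manifold_rep k M xb U\<^sub>M FM FM'"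
    and "local_manifold_rep k N xb U\<^sub>N FN FN'"
    and "local_manifold_rep k (M \<inter> N) xb U\<^sub>M\<^sub>N FMN FMN'"
    and "kernel FMN' = kernel FM' \<inter> kernel FN'"
  shows "onorm (\<lambda>x. (\<alpha> *\<^sub>R relaxed_proj \<alpha>2 (kernel FM') (relaxed_proj \<alpha>1 (kernel FN') x)
                      + (1 - \<alpha>) *\<^sub>R x)
                    - Proj (kernel FM' \<inter> kernel FN') x) < 1"
proof -
  have "(FM has_derivative FM') (at xb)" "(FN has_derivative FN') (at xb)"
    using assms(10,11) unfolding local_manifold_rep_def by auto
  then have "subspace (kernel FM')" "subspace (kernel FN')"
    using kernel_subspace has_derivative_bounded_linear by blast+
  then show ?thesis using main_abs assms(1-7) by blast
qed

end
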